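(* Let $W_{\tilde{\boldsymbol{\delta}}}\equiv\mathbb{E}[Y_T(\tilde{\boldsymbol{\delta}}(\cdot))]$ for $\tilde{\boldsymbol{\delta}}(\cdot)\in\mathcal{D}_{stoch}$ and $W_{\boldsymbol{\delta}}\equiv E[Y_T(\boldsymbol{\delta}(\cdot))]$ for $\boldsymbol{\delta}(\cdot)\in\mathcal{D}$. Then $$\boldsymbol{\delta}^*(\cdot)\equiv\arg\max_{\boldsymbol{\delta}(\cdot)\in\mathcal{D}}W_{\boldsymbol{\delta}}=\arg\max_{\tilde{\boldsymbol{\delta}}(\cdot)\in\mathcal{D}_{stoch}}W_{\tilde{\boldsymbol{\delta}}}.$$
   Context: Fix $T\ge1$; $\boldsymbol{w}^t=(w_1,\dots,w_t)$. Binary potential outcomes $Y_t(\boldsymbol{d}^t)\in\{0,1\}$ are defined for each treatment history $\boldsymbol{d}^t\in\{0,1\}^t$, $t=1,\dots,T$. A deterministic dynamic regime is $\boldsymbol{\delta}(\cdot)=(\delta_1,\delta_2(\cdot),\dots,\delta_T(\cdot))$ with $\delta_t:\{0,1\}^{t-1}\times\{0,1\}^{t-1}\to\{0,1\}$; $\mathcal{D}$ is the set of all such regimes. The counterfactual outcome is $Y_T(\boldsymbol{\delta}(\cdot))=Y_T(\boldsymbol{d})$ where $d_1=\delta_1$ and $d_t=\delta_t(\boldsymbol{Y}^{t-1}(\boldsymbol{d}^{t-1}),\boldsymbol{d}^{t-1})$ for $t\ge2$. A stochastic dynamic regime is $\tilde{\boldsymbol{\delta}}(\cdot)=(\tilde\delta_1,\dots,\tilde\delta_T(\cdot))$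 whose rules take values in $[0,1]$ (probability of treatment) given the past outcomes and treatments; $\mathcal{D}_{stoch}$ is the set of all such regimes, so $\mathcal{D}\subset\mathcal{D}_{stoch}$. $Y_T(\tilde{\boldsymbol{\delta}}(\cdot))$ is the counterfactual outcome $Y_T(\boldsymbol{\delta}(\cdot))$ where, for every $t\le T$, the deterministic rule value $\delta_t(\cdot)=1$ is randomly assigned with probability $\tilde\delta_t(\cdot)$ and $\delta_t(\cdot)=0$ otherwise; $\mathbb{E}$ denotes expectation over the counterfactual outcomes and this randomization. *)

theory Defs
  imports "HOL-Probability.Probability"
begin

text \<open>A world fixes all binary potential outcomes: Y_t(d^t) = w d^t for a
treatment history d^t (a bool list of length t, 1 \<le> t \<le> T).
The joint law of the potential outcomes is a pmf over worlds.\<close>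
type_synonym world = "bool list \<Rightarrow> bool"

text \<open>Deterministic regime: delta t y d is the treatment at period t given the
outcome history y = Y^{t-1} and treatment history d = d^{t-1} (lists of length t-1).\<close>
type_synonym det_regime = "nat \<Rightarrow> bool list \<Rightarrow> bool list \<Rightarrow> bool"

text \<open>Stochastic regime: probability of treatment at period t given the past.\<close>
type_synonym stoch_regime = "nat \<Rightarrow> bool list \<Rightarrow> bool list \<Rightarrow> real"

definition regimes :: "det_regime set" where
  "regimes = UNIV"

definition stoch_regimes :: "stoch_regime set" where
  "stoch_regimes = {dt. \<forall>t y d. 0 \<le> dt t y d \<and> dt t y d \<le> 1}"

definition embed :: "det_regime \<Rightarrow> stoch_regime" where
  "embed delta = (\<lambda>t y d. if delta t y d then 1 else 0)"

fun det_path :: "det_regime \<Rightarrow> world \<Rightarrow> nat \<Rightarrow> bool list \<times> bool list" where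
  "det_path delta w 0 = ([], [])"
| "det_path delta w (Suc t) =
     (let (d, y) = det_path delta w t; d' = d @ [delta (Suc t) y d] in (d', y @ [w d']))"

definition Y_det :: "nat \<Rightarrow> det_regime \<Rightarrow> world \<Rightarrow> bool" where
  "Y_det T delta w = w (fst (det_path delta w T))"

fun stoch_path :: "stoch_regime \<Rightarrow> world \<Rightarrow> nat \<Rightarrow> (bool list \<times> bool list) pmf" where
  "stoch_path dt w 0 = return_pmf ([], [])"
| "stoch_path dt w (Suc t) =
     bind_pmf (stoch_path dt w t) (\<lambda>(d, y).
       map_pmf (\<lambda>b. let d' = d @ [b] in (d', y @ [w d'])) (bernoulli_pmf (dt (Suc t) y d)))"

definition W_det :: "world pmf \<Rightarrow> nat \<Rightarrow> det_regime \<Rightarrow> real" where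
  "W_det P T delta = measure_pmf.expectation P (\<lambda>w. of_bool (Y_det T delta w))"

definition W_stoch :: "world pmf \<Rightarrow> nat \<Rightarrow> stoch_regime \<Rightarrow> real" where
  "W_stoch P T dt = measure_pmf.expectation
      (bind_pmf P (\<lambda>w. map_pmf (\<lambda>(d, y). w d) (stoch_path dt w T))) (\<lambda>b. of_bool b)"

end

theory Submission
  imports Defs
begin

definition Kt :: "nat \<Rightarrow> (nat \<times> bool list \<times> bool list) set" where
  "Kt t = {(s,y,d). 1 \<le> s \<and> s \<le> t \<and> length y = s-1 \<and> length d = s-1}"

definition Lt :: "nat \<Rightarrow> (nat \<times> bool list \<times> bool list) set" where
  "Lt t = {(s,y,d). s = Suc t \<and> length y = t \<and> length d = t}"

definition cur :: "(nat \<times> bool list \<times> bool list \<Rightarrow> bool) \<Rightarrow> det_regime" where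
  "cur f = (\<lambda>s y d. f (s,y,d))"

definition bern :: "stoch_regime \<Rightarrow> nat \<times> bool list \<times> bool list \<Rightarrow> bool pmf" where
  "bern dt = (\<lambda>(s,y,d). bernoulli_pmf (dt s y d))"

lemma finite_Kt: "finite (Kt t)"
proof -
  have "Kt t \<subseteq> {..t} \<times> {xs. length xs \<le> t} \<times> {xs. length xs \<le> t}"
    unfolding Kt_def by auto
  moreover have "finite ({..t} \<times> {xs::bool list. length xs \<le> t} \<times> {xs::bool list. length xs \<le> t})"
    using finite_lists_length_le[of "UNIV::bool set" t] by (intro finite_cartesian_product) auto
  ultimately show ?thesis by (rule finite_subset)
qed

lemma finite_Lt: "finite (Lt t)"
proof -
  have "Lt t \<subseteq> Kt (Suc t)" unfolding Lt_def Kt_def by auto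
  thus ?thesis using finite_Kt finite_subset by blast
qed

lemma Kt_Suc: "Kt (Suc t) = Kt t \<union> Lt t" and Kt_Lt_disj: "Kt t \<inter> Lt t = {}"
  unfolding Kt_def Lt_def by auto

lemma det_path_len: "length (fst (det_path delta w t)) = t \<and> length (snd (det_path delta w t)) = t"
  by (induction t) (auto simp: Let_def split: prod.splits)

lemma det_path_agree:
  "(\<And>s y d. 1 \<le> s \<Longrightarrow> s \<le> t \<Longrightarrow> length y = s-1 \<Longrightarrow> length d = s-1 \<Longrightarrow> delta s y d = delta' s y d)
   \<Longrightarrow> det_path delta w t = det_path delta' w t"
proof (induction t)
  case 0
  then show ?case by simp
next
  case (Suc t)
  have IH: "det_path delta w t = det_path delta' w t" using Suc by auto
  obtain d y where dy: "det_path delta w t = (d,y)" by fastforce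
  have l: "length d = t" "length y = t" using det_path_len[of delta w t] dy by auto
  have "delta (Suc t) y d = delta' (Suc t) y d" using Suc.prems l by auto
  moreover have dy': "det_path delta' w t = (d,y)" using IH dy by simp
  ultimately show ?case using dy by (simp add: Let_def)
qed

lemma coupling:
  "stoch_path dt w t = map_pmf (\<lambda>f. det_path (cur f) w t) (Pi_pmf (Kt t) False (bern dt))"
proof (induction t)
  case 0
  have "Kt 0 = {}" unfolding Kt_def by auto
  then show ?case by simp
next
  case (Suc t)
  define stp where "stp = (\<lambda>(d::bool list) (y::bool list) b. let d' = d @ [b] in (d', y @ [w d']))"
  define mg where "mg = (\<lambda>(f,g) x. if x \<in> Kt t then f x else (g x::bool))"
  have lhs: "stoch_path dt w (Suc t) = bind_pmf (Pi_pmf (Kt t) False (bern dt))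
      (\<lambda>f. case det_path (cur f) w t of (d,y) \<Rightarrow> map_pmf (stp d y) (bernoulli_pmf (dt (Suc t) y d)))"
    by (simp add: Suc stp_def bind_map_pmf o_def)
  have "Pi_pmf (Kt (Suc t)) False (bern dt) =
      map_pmf mg (pair_pmf (Pi_pmf (Kt t) False (bern dt)) (Pi_pmf (Lt t) False (bern dt)))"
    unfolding Kt_Suc mg_def by (rule Pi_pmf_union[OF finite_Kt finite_Lt Kt_Lt_disj])
  hence rhs: "map_pmf (\<lambda>f. det_path (cur f) w (Suc t)) (Pi_pmf (Kt (Suc t)) False (bern dt))
     = bind_pmf (Pi_pmf (Kt t) False (bern dt)) (\<lambda>f. bind_pmf (Pi_pmf (Lt t) False (bern dt))
          (\<lambda>g. return_pmf (det_path (cur (mg (f,g))) w (Suc t))))"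
    by (simp add: pair_pmf_def map_bind_pmf bind_assoc_pmf bind_return_pmf map_pmf_def)
  show ?case unfolding lhs rhs
  proof (intro bind_pmf_cong refl)
    fix f
    obtain d y where dy: "det_path (cur f) w t = (d,y)" by fastforce
    have l: "length d = t" "length y = t" using det_path_len[of "cur f" w t] dy by auto
    have k: "(Suc t, y, d) \<in> Lt t" "(Suc t, y, d) \<notin> Kt t" using l unfolding Lt_def Kt_def by auto
    have e1: "\<And>g. det_path (cur (mg (f,g))) w t = (d,y)"
      using dy by (subst det_path_agree[of t _ "cur f"]) (auto simp: cur_def mg_def Kt_def)
    have e2: "\<And>g. det_path (cur (mg (f,g))) w (Suc t) = stp d y (g (Suc t, y, d))"
      using e1 k by (simp add: stp_def cur_def mg_def Let_def)
    have "bind_pmf (Pi_pmf (Lt t) False (bern dt)) (\<lambda>g. return_pmf (det_path (cur (mg (f,g))) w (Suc t)))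
        = map_pmf (stp d y) (map_pmf (\<lambda>g. g (Suc t, y, d)) (Pi_pmf (Lt t) False (bern dt)))"
      by (simp only: e2) (simp add: map_pmf_def bind_assoc_pmf bind_return_pmf)
    also have "\<dots> = map_pmf (stp d y) (bernoulli_pmf (dt (Suc t) y d))"
      using k by (simp add: Pi_pmf_component[OF finite_Lt] bern_def)
    finally show "(case det_path (cur f) w t of (d, y) \<Rightarrow> map_pmf (stp d y) (bernoulli_pmf (dt (Suc t) y d))) =
         bind_pmf (Pi_pmf (Lt t) False (bern dt)) (\<lambda>g. return_pmf (det_path (cur (mg (f,g))) w (Suc t)))"
      using dy by simp
  qed
qed

lemma exp_bool: "measure_pmf.expectation (M :: bool pmf) (\<lambda>b. of_bool b) = pmf M True"
  by (subst integral_measure_pmf_real[of "{True}"]) auto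

lemma W_stoch_mix:
  "W_stoch P T dt = measure_pmf.expectation (Pi_pmf (Kt T) False (bern dt)) (\<lambda>f. W_det P T (cur f))"
proof -
  let ?Q = "Pi_pmf (Kt T) False (bern dt)"
  have "bind_pmf P (\<lambda>w. map_pmf (\<lambda>(d, y). w d) (stoch_path dt w T))
      = bind_pmf P (\<lambda>w. bind_pmf ?Q (\<lambda>f. return_pmf (Y_det T (cur f) w)))"
    by (simp add: coupling map_pmf_comp Y_det_def map_pmf_def case_prod_unfold bind_assoc_pmf bind_return_pmf)
  also have "\<dots> = bind_pmf ?Q (\<lambda>f. bind_pmf P (\<lambda>w. return_pmf (Y_det T (cur f) w)))"
    by (rule bind_commute_pmf)
  finally have eq: "bind_pmf P (\<lambda>w. map_pmf (\<lambda>(d, y). w d) (stoch_path dt w T))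
      = bind_pmf ?Q (\<lambda>f. map_pmf (Y_det T (cur f)) P)" by (simp add: map_pmf_def)
  show ?thesis
    unfolding W_stoch_def eq exp_bool pmf_bind W_det_def
    by (simp add: exp_bool[symmetric])
qed

lemma embed_eq: "W_stoch P T (embed delta) = W_det P T delta"
proof -
  have b: "bernoulli_pmf (if c then 1 else 0) = return_pmf c" for c
    by (rule pmf_eqI) (cases c; auto simp: indicator_def split: if_splits)
  have sp: "stoch_path (embed delta) w t = return_pmf (det_path delta w t)" for w t
    by (induction t) (auto simp: embed_def b Let_def bind_return_pmf split: prod.splits)
  show ?thesis unfolding W_stoch_def W_det_def
    by (simp add: sp map_pmf_def[symmetric] Y_det_def case_prod_unfold)
qed

lemma exists_max: "\<exists>delta. \<forall>delta'. W_det P T delta' \<le> W_det P T delta"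
proof -
  define F where "F = PiE_dflt (Kt T) False (\<lambda>_. UNIV :: bool set)"
  have fin: "finite F" unfolding F_def using finite_Kt by (intro finite_PiE_dflt) auto
  have ne: "F \<noteq> {}" unfolding F_def by simp
  define r where "r = (\<lambda>delta::det_regime. (\<lambda>(s,y,d). if (s,y,d) \<in> Kt T then delta s y d else False))"
  have rF: "r delta \<in> F" for delta unfolding F_def PiE_dflt_def r_def by auto
  have rW: "W_det P T (cur (r delta)) = W_det P T delta" for delta
  proof -
    have "det_path (cur (r delta)) w T = det_path delta w T" for w
      by (rule det_path_agree) (auto simp: cur_def r_def Kt_def)
    thus ?thesis unfolding W_det_def Y_det_def by simp
  qed
  define S where "S = (\<lambda>g. W_det P T (cur g)) ` F"
  have Sf: "finite S" "S \<noteq> {}" unfolding S_def using fin ne by auto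
  obtain f where f: "f \<in> F" "W_det P T (cur f) = Max S"
    using Max_in[OF Sf] unfolding S_def by auto
  have "\<forall>g\<in>F. W_det P T (cur g) \<le> W_det P T (cur f)"
    using f Max_ge[OF Sf(1)] unfolding S_def by auto
  show ?thesis
    using \<open>\<forall>g\<in>F. W_det P T (cur g) \<le> W_det P T (cur f)\<close> rF rW by metis
qed

theorem theorem3:
  fixes P :: "world pmf" and T :: nat
  assumes "T \<ge> 1"
  shows "(\<exists>delta\<in>regimes. \<forall>delta'\<in>regimes. W_det P T delta' \<le> W_det P T delta)
       \<and> (\<forall>delta\<in>regimes.
            (\<forall>delta'\<in>regimes. W_det P T delta' \<le> W_det P T delta)
            \<longleftrightarrow> (\<forall>dt\<in>stoch_regimes. W_stoch P T dt \<le> W_stoch P T (embed delta)))"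
proof -
  obtain dm where dm: "\<forall>delta'. W_det P T delta' \<le> W_det P T dm" using exists_max by blast
  have bound: "W_stoch P T dt \<le> W_det P T dm" for dt
  proof -
    have "W_stoch P T dt \<le> measure_pmf.expectation (Pi_pmf (Kt T) False (bern dt)) (\<lambda>f. W_det P T dm)"
      unfolding W_stoch_mix
    proof (rule integral_mono)
      have b: "\<bar>W_det P T d\<bar> \<le> 1" for d
      proof -
        have "\<bar>W_det P T d\<bar> \<le> measure_pmf.expectation P (\<lambda>w. \<bar>of_bool (Y_det T d w)::real\<bar>)"
          unfolding W_det_def by (rule integral_abs_bound)
        also have "\<dots> \<le> measure_pmf.expectation P (\<lambda>w. 1::real)"
          by (rule integral_mono) (auto intro: measure_pmf.integrable_const_bound[where B=1])
        finally show ?thesis by simp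
      qed
      show "integrable (measure_pmf (Pi_pmf (Kt T) False (bern dt))) (\<lambda>f. W_det P T (cur f))"
        using b by (intro measure_pmf.integrable_const_bound[where B=1]) auto
    qed (use dm in auto)
    thus ?thesis by simp
  qed
  show ?thesis
  proof (intro conjI ballI iffI)
    show "\<exists>delta\<in>regimes. \<forall>delta'\<in>regimes. W_det P T delta' \<le> W_det P T delta"
      using dm unfolding regimes_def by auto
  next
    fix delta dt
    assume "\<forall>delta'\<in>regimes. W_det P T delta' \<le> W_det P T delta"
    hence "W_det P T dm \<le> W_det P T delta" unfolding regimes_def by auto
    thus "W_stoch P T dt \<le> W_stoch P T (embed delta)" using bound[of dt] embed_eq by (metis order_trans)
  next
    fix delta delta'
    assume "\<forall>dt\<in>stoch_regimes. W_stoch P T dt \<le> W_stoch P T (embed delta)"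
    moreover have "embed delta' \<in> stoch_regimes" unfolding stoch_regimes_def embed_def by auto
    ultimately show "W_det P T delta' \<le> W_det P T delta" using embed_eq by metis
  qed
qed

end
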